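(* Let $E$ be a separable Hilbert space and let $\mu$ be a probability measure on $E$ with $\int_{E}\|x\|\,d\mu(x)<\infty$ and $\int_{E}x\,d\mu(x)=0$. Let $n\in\mathbb{N}$ and let $X_{1},\ldots,X_{n}$ be i.i.d. random elements of $E$ with distribution $\mu$. Then \[\mathbb{E}\,W_{1,1}\Big(\mu,\frac{1}{n}\sum_{i=1}^{n}\delta_{X_{i}}\Big)\geq\frac{1}{2\sqrt{2n}}\int_{E}\|x\|\,d\mu(x).\]
   Context: For probability measures $\mu_{1},\mu_{2}$ on $E$, $W_{1,1}(\mu_{1},\mu_{2})=\sup_{v\in E,\|v\|\leq 1}W_{1}(v_{\#}\mu_{1},v_{\#}\mu_{2})$, where $v_{\#}\mu_{i}$ is the pushforward under $x\mapsto\langle x,v\rangle$ and $W_{1}$ is the 1-Wasserstein distance on $\mathbb{R}$. $\delta_{x}$ denotes a Dirac mass. *)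

theory Defs
  imports "HOL-Probability.Probability"
begin

definition W1 :: "real measure \<Rightarrow> real measure \<Rightarrow> ennreal" where
  "W1 P Q = (INF \<pi> \<in> {\<pi> :: (real \<times> real) measure.
       sets \<pi> = sets (borel :: (real \<times> real) measure) \<and>
       distr \<pi> borel fst = P \<and> distr \<pi> borel snd = Q}.
     \<integral>\<^sup>+ z. ennreal \<bar>fst z - snd z\<bar> \<partial>\<pi>)"

definition W11 :: "'a::real_inner measure \<Rightarrow> 'a measure \<Rightarrow> ennreal" where
  "W11 \<mu>1 \<mu>2 = (SUP v \<in> {v. norm v \<le> 1}.
      W1 (distr \<mu>1 borel (\<lambda>x. x \<bullet> v)) (distr \<mu>2 borel (\<lambda>x. x \<bullet> v)))"

definition empirical_measure :: "nat \<Rightarrow> (nat \<Rightarrow> 'a::topological_space) \<Rightarrow> 'a measure" where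
  "empirical_measure n x =
     measure_of UNIV (sets borel) (\<lambda>A. ennreal (real (card {i\<in>{..<n}. x i \<in> A}) / real n))"

end

theory Submission
  imports Defs
begin

definition sg :: "'i set \<Rightarrow> 'i \<Rightarrow> real" where "sg B i = (if i \<in> B then -1 else 1)"
definition WW :: "'i set \<Rightarrow> 'i set \<Rightarrow> real" where "WW A B = (\<Prod>i\<in>A. sg B i)"
definition symd :: "'i set \<Rightarrow> 'i set \<Rightarrow> 'i set" where "symd B C = (B - C) \<union> (C - B)"

lemma symd_symd[simp]: "symd (symd B C) C = B" by (auto simp: symd_def)

lemma symd_sub: "B \<subseteq> I \<Longrightarrow> i \<in> I \<Longrightarrow> symd B {i} \<subseteq> I" by (auto simp: symd_def)

lemma WW_mult: "WW A B * WW A C = WW A (symd B C)"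
  unfolding WW_def prod.distrib[symmetric]
  by (rule prod.cong) (auto simp: sg_def symd_def)

lemma sum_WW:
  assumes "finite I"
  shows "(\<Sum>A\<in>Pow I. WW A C) = (if I \<inter> C = {} then 2 ^ card I else 0)"
proof -
  have "(\<Prod>x\<in>I. sg C x + 1) = (\<Sum>X\<in>Pow I. (\<Prod>x\<in>X. sg C x) * (\<Prod>x\<in>I-X. 1))"
    by (rule prod_add[OF assms])
  hence e: "(\<Sum>A\<in>Pow I. WW A C) = (\<Prod>x\<in>I. sg C x + 1)" by (simp add: WW_def)
  show ?thesis
  proof (cases "I \<inter> C = {}")
    case True
    have "(\<Prod>x\<in>I. sg C x + 1) = (\<Prod>x\<in>I. 2)"
      by (rule prod.cong) (use True in \<open>auto simp: sg_def\<close>)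
    then show ?thesis using e True by simp
  next
    case False
    then obtain x where "x \<in> I" "x \<in> C" by blast
    hence "(\<Prod>x\<in>I. sg C x + 1) = 0"
      using assms by (intro prod_zero) (auto simp: sg_def)
    then show ?thesis using e False by simp
  qed
qed

lemma WW_single: "finite A \<Longrightarrow> WW A {i} = sg A i"
  unfolding WW_def sg_def
  by (subst prod.delta[symmetric]) (auto intro!: prod.cong)

lemma WW_empty[simp]: "WW {} B = 1" by (simp add: WW_def)

lemma WW_compl:
  assumes "A \<subseteq> I"
  shows "WW A (I - B) = (-1) ^ card A * WW A B"
proof -
  have "WW A (I - B) = (\<Prod>x\<in>A. (-1) * sg B x)"
    unfolding WW_def using assms by (intro prod.cong) (auto simp: sg_def)
  also have "\<dots> = (-1) ^ card A * WW A B"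
    unfolding prod.distrib by (simp add: WW_def)
  finally show ?thesis .
qed

lemma WW_card: "finite A \<Longrightarrow> WW A B = (-1) ^ card (A \<inter> B)"
  unfolding WW_def sg_def by (simp add: prod.If_cases Int_def)

lemma WW_sym: "finite A \<Longrightarrow> finite B \<Longrightarrow> WW A B = WW B A"
  by (simp add: WW_card Int_commute)

definition hat :: "'i set \<Rightarrow> ('i set \<Rightarrow> real) \<Rightarrow> 'i set \<Rightarrow> real" where
  "hat I f A = (\<Sum>B\<in>Pow I. f B * WW A B) / 2 ^ card I"

lemma sum_WW_pair:
  assumes "finite I" "B \<subseteq> I" "C \<subseteq> I"
  shows "(\<Sum>A\<in>Pow I. WW A B * WW A C) = (if B = C then 2 ^ card I else 0)"
proof -
  have "(\<Sum>A\<in>Pow I. WW A B * WW A C) = (\<Sum>A\<in>Pow I. WW A (symd B C))"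
    by (simp add: WW_mult)
  also have "\<dots> = (if I \<inter> symd B C = {} then 2 ^ card I else 0)"
    by (rule sum_WW[OF assms(1)])
  also have "(I \<inter> symd B C = {}) = (B = C)"
    using assms by (auto simp: symd_def)
  finally show ?thesis .
qed

lemma parseval:
  assumes "finite I"
  shows "(\<Sum>B\<in>Pow I. f B * g B) / 2 ^ card I = (\<Sum>A\<in>Pow I. hat I f A * hat I g A)"
proof -
  define k where "k = card I"
  have "(\<Sum>A\<in>Pow I. hat I f A * hat I g A)
      = (\<Sum>A\<in>Pow I. (\<Sum>B\<in>Pow I. \<Sum>C\<in>Pow I. (f B * g C) * (WW A B * WW A C))) / (2^k * 2^k)"
  proof -
    have "hat I f A * hat I g A = (\<Sum>B\<in>Pow I. \<Sum>C\<in>Pow I. (f B * g C) * (WW A B * WW A C)) / (2^k * 2^k)" for A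
    proof -
      have "hat I f A * hat I g A = ((\<Sum>B\<in>Pow I. f B * WW A B) * (\<Sum>C\<in>Pow I. g C * WW A C)) / (2^k * 2^k)"
        unfolding hat_def k_def by simp
      also have "(\<Sum>B\<in>Pow I. f B * WW A B) * (\<Sum>C\<in>Pow I. g C * WW A C) = (\<Sum>B\<in>Pow I. \<Sum>C\<in>Pow I. (f B * g C) * (WW A B * WW A C))"
        unfolding sum_product by (intro sum.cong refl) (simp add: mult_ac)
      finally show ?thesis .
    qed
    then have "(\<Sum>A\<in>Pow I. hat I f A * hat I g A) = (\<Sum>A\<in>Pow I. (\<Sum>B\<in>Pow I. \<Sum>C\<in>Pow I. (f B * g C) * (WW A B * WW A C)) / (2^k * 2^k))"
      by (intro sum.cong refl)
    also have "\<dots> = (\<Sum>A\<in>Pow I. (\<Sum>B\<in>Pow I. \<Sum>C\<in>Pow I. (f B * g C) * (WW A B * WW A C))) / (2^k * 2^k)"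
      by (rule sum_divide_distrib[symmetric])
    finally show ?thesis .
  qed
  also have "(\<Sum>A\<in>Pow I. (\<Sum>B\<in>Pow I. \<Sum>C\<in>Pow I. (f B * g C) * (WW A B * WW A C)))
      = (\<Sum>B\<in>Pow I. \<Sum>A\<in>Pow I. \<Sum>C\<in>Pow I. (f B * g C) * (WW A B * WW A C))"
    by (rule sum.swap)
  also have "\<dots> = (\<Sum>B\<in>Pow I. \<Sum>C\<in>Pow I. \<Sum>A\<in>Pow I. (f B * g C) * (WW A B * WW A C))"
    by (rule sum.cong[OF refl], rule sum.swap)
  also have "\<dots> = (\<Sum>B\<in>Pow I. \<Sum>C\<in>Pow I. (f B * g C) * (\<Sum>A\<in>Pow I. WW A B * WW A C))"
    by (simp only: sum_distrib_left)
  also have "\<dots> = (\<Sum>B\<in>Pow I. \<Sum>C\<in>Pow I. if B = C then f B * g B * 2^k else 0)"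
    using assms by (intro sum.cong refl) (auto simp: sum_WW_pair k_def)
  also have "\<dots> = (\<Sum>B\<in>Pow I. f B * g B * 2^k)"
    using assms by (simp add: sum.delta)
  finally show ?thesis
    by (simp add: k_def sum_distrib_right[symmetric])
qed

lemma hat_diff: "hat I (\<lambda>B. f B - g B) A = hat I f A - hat I g A"
  unfolding hat_def by (simp add: algebra_simps sum_subtractf diff_divide_distrib)

lemma hat_empty: "hat I f {} = (\<Sum>B\<in>Pow I. f B) / 2 ^ card I"
  unfolding hat_def by simp

lemma hat_flip:
  assumes "finite I" "i \<in> I" "A \<subseteq> I"
  shows "hat I (\<lambda>B. f (symd B {i})) A = sg A i * hat I f A"
proof -
  have "(\<Sum>B\<in>Pow I. f (symd B {i}) * WW A B) = (\<Sum>B\<in>Pow I. f B * WW A (symd B {i}))"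
    by (rule sum.reindex_bij_witness[of _ "\<lambda>B. symd B {i}" "\<lambda>B. symd B {i}"])
       (use assms in \<open>auto simp: symd_sub\<close>)
  also have "\<dots> = (\<Sum>B\<in>Pow I. sg A i * (f B * WW A B))"
    using assms finite_subset[OF assms(3)]
    by (intro sum.cong refl) (simp add: WW_mult[symmetric] WW_single)
  finally show ?thesis unfolding hat_def by (simp add: sum_distrib_left[symmetric])
qed

lemma hat_even:
  assumes "finite I" "A \<subseteq> I" "odd (card A)" "\<And>B. B \<subseteq> I \<Longrightarrow> f (I - B) = f B"
  shows "hat I f A = 0"
proof -
  have "(\<Sum>B\<in>Pow I. f B * WW A B) = (\<Sum>B\<in>Pow I. f (I - B) * WW A (I - B))"
    by (rule sum.reindex_bij_witness[of _ "\<lambda>B. I - B" "\<lambda>B. I - B"]) (auto simp: double_diff)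
  also have "\<dots> = (\<Sum>B\<in>Pow I. - (f B * WW A B))"
    using assms by (intro sum.cong refl) (simp add: WW_compl)
  finally have "(\<Sum>B\<in>Pow I. f B * WW A B) = 0" by (simp add: sum_negf)
  thus ?thesis by (simp add: hat_def)
qed

lemma cube_ineq:
  fixes f :: "'i set \<Rightarrow> real"
  assumes "finite I" "\<And>B. B \<subseteq> I \<Longrightarrow> f (I - B) = f B"
  shows "(\<Sum>i\<in>I. (\<Sum>B\<in>Pow I. f B * (f B - f (symd B {i}))) / 2 ^ card I)
     \<ge> 4 * ((\<Sum>B\<in>Pow I. f B * f B) / 2 ^ card I - ((\<Sum>B\<in>Pow I. f B) / 2 ^ card I)^2)"
proof -
  have e1: "(\<Sum>B\<in>Pow I. f B * (f B - f (symd B {i}))) / 2 ^ card I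
      = (\<Sum>A\<in>Pow I. (1 - sg A i) * (hat I f A)^2)" if "i \<in> I" for i
  proof -
    have "(\<Sum>B\<in>Pow I. f B * (f B - f (symd B {i}))) / 2 ^ card I
        = (\<Sum>A\<in>Pow I. hat I f A * hat I (\<lambda>B. f B - f (symd B {i})) A)"
      by (rule parseval[OF assms(1)])
    also have "\<dots> = (\<Sum>A\<in>Pow I. (1 - sg A i) * (hat I f A)^2)"
      using assms that by (intro sum.cong refl) (simp add: hat_diff hat_flip power2_eq_square algebra_simps)
    finally show ?thesis .
  qed
  have "(\<Sum>i\<in>I. (\<Sum>B\<in>Pow I. f B * (f B - f (symd B {i}))) / 2 ^ card I)
      = (\<Sum>i\<in>I. \<Sum>A\<in>Pow I. (1 - sg A i) * (hat I f A)^2)"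
    using e1 by simp
  also have "\<dots> = (\<Sum>A\<in>Pow I. (\<Sum>i\<in>I. (1 - sg A i)) * (hat I f A)^2)"
    by (simp add: sum.swap[of _ I] sum_distrib_right)
  also have "\<dots> = (\<Sum>A\<in>Pow I. (2 * card A) * (hat I f A)^2)"
  proof (intro sum.cong refl)
    fix A assume A: "A \<in> Pow I"
    have "(\<Sum>i\<in>I. (1 - sg A i)) = (\<Sum>i\<in>I. if i \<in> A then 2 else 0)"
      by (intro sum.cong refl) (auto simp: sg_def)
    also have "\<dots> = 2 * card A"
      using A assms(1) by (simp add: sum.If_cases Int_absorb1 Int_def[symmetric])
    finally show "(\<Sum>i\<in>I. (1 - sg A i)) * (hat I f A)^2 = (2 * card A) * (hat I f A)^2" by simp
  qed
  also have "\<dots> \<ge> (\<Sum>A\<in>Pow I. 4 * (if A = {} then 0 else (hat I f A)^2))"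
  proof (intro sum_mono)
    fix A assume A: "A \<in> Pow I"
    show "4 * (if A = {} then 0 else (hat I f A)^2) \<le> (2 * card A) * (hat I f A)^2"
    proof (cases "card A = 1")
      case True
      then show ?thesis using hat_even[of I A f] assms A by auto
    next
      case False
      have fA: "finite A" using A assms(1) finite_subset by auto
      show ?thesis
      proof (cases "A = {}")
        case True then show ?thesis by simp
      next
        case ne: False
        have "card A \<noteq> 0" using ne fA by simp
        hence "card A \<ge> 2" using False by linarith
        hence "4 \<le> real (2 * card A)" by simp
        hence "4 * (hat I f A)^2 \<le> real (2 * card A) * (hat I f A)^2"
          by (rule mult_right_mono) simp
        then show ?thesis using ne by simp
      qed
    qed
  qed
  also have "(\<Sum>A\<in>Pow I. 4 * (if A = {} then 0 else (hat I f A)^2))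
      = 4 * ((\<Sum>A\<in>Pow I. (hat I f A)^2) - (hat I f {})^2)"
  proof -
    have "(\<Sum>A\<in>Pow I. (hat I f A)^2) = (hat I f {})^2 + (\<Sum>A\<in>Pow I - {{}}. (hat I f A)^2)"
      using assms(1) by (subst sum.remove[of _ "{}"]) auto
    moreover have "(\<Sum>A\<in>Pow I. (if A = {} then 0 else (hat I f A)^2)) = (\<Sum>A\<in>Pow I - {{}}. (hat I f A)^2)"
      using assms(1) by (subst sum.remove[of _ "{}"]) (auto intro!: sum.cong)
    ultimately show ?thesis by (simp add: sum_distrib_left[symmetric])
  qed
  also have "(\<Sum>A\<in>Pow I. (hat I f A)^2) = (\<Sum>B\<in>Pow I. f B * f B) / 2 ^ card I"
    using parseval[OF assms(1), of f f] by (simp add: power2_eq_square)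
  finally show ?thesis by (simp add: hat_empty)
qed


definition SS :: "'i set \<Rightarrow> ('i \<Rightarrow> 'a::real_inner) \<Rightarrow> 'i set \<Rightarrow> 'a" where
  "SS I x B = (\<Sum>j\<in>I. sg B j *\<^sub>R x j)"

lemma SS_flip:
  assumes "finite I" "i \<in> I"
  shows "SS I x (symd B {i}) = SS I x B - (2 * sg B i) *\<^sub>R x i"
proof -
  have "SS I x (symd B {i}) = (\<Sum>j\<in>I. sg B j *\<^sub>R x j + (if j = i then - (2 * sg B i) *\<^sub>R x i else 0))"
    unfolding SS_def by (intro sum.cong refl) (auto simp: sg_def symd_def algebra_simps scaleR_2)
  also have "\<dots> = SS I x B - (2 * sg B i) *\<^sub>R x i"
    using assms by (simp add: sum.distrib SS_def)
  finally show ?thesis .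
qed

lemma SS_compl:
  assumes "B \<subseteq> I"
  shows "SS I x (I - B) = - SS I x B"
  unfolding SS_def sum_negf[symmetric]
  by (intro sum.cong refl) (auto simp: sg_def)

lemma SS_pointwise:
  assumes "finite I"
  shows "(\<Sum>i\<in>I. norm (SS I x B) * (norm (SS I x B) - norm (SS I x (symd B {i}))))
        \<le> 2 * (norm (SS I x B) * norm (SS I x B))"
proof -
  have "(\<Sum>i\<in>I. norm (SS I x B) * (norm (SS I x B) - norm (SS I x (symd B {i}))))
      \<le> (\<Sum>i\<in>I. (2 * sg B i) * (SS I x B \<bullet> x i))"
  proof (rule sum_mono)
    fix i assume i: "i \<in> I"
    let ?S = "SS I x B" and ?c = "2 * sg B i"
    have "?S \<bullet> (?S - ?c *\<^sub>R x i) \<le> norm ?S * norm (?S - ?c *\<^sub>R x i)"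
      by (rule norm_cauchy_schwarz)
    moreover have "norm ?S * norm ?S = ?S \<bullet> ?S" by (simp add: dot_square_norm power2_eq_square)
    ultimately show "norm ?S * (norm ?S - norm (SS I x (symd B {i}))) \<le> ?c * (?S \<bullet> x i)"
      using i assms by (simp add: SS_flip inner_diff_right algebra_simps)
  qed
  also have "\<dots> = 2 * (SS I x B \<bullet> SS I x B)"
    unfolding SS_def by (simp add: inner_sum_right sum_distrib_left mult.assoc)
  also have "\<dots> = 2 * (norm (SS I x B) * norm (SS I x B))"
    by (simp add: dot_square_norm power2_eq_square)
  finally show ?thesis .
qed

lemma sum_sg_sg:
  assumes "finite I" "j \<in> I" "l \<in> I"
  shows "(\<Sum>B\<in>Pow I. sg B j * sg B l) = (if j = l then 2 ^ card I else 0)"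
proof (cases "j = l")
  case True
  have "(\<Sum>B\<in>Pow I. sg B j * sg B l) = (\<Sum>B\<in>Pow I. 1)"
    using True by (intro sum.cong refl) (auto simp: sg_def)
  then show ?thesis using True assms by (simp add: card_Pow)
next
  case False
  have "(\<Sum>B\<in>Pow I. sg B j * sg B l) = (\<Sum>B\<in>Pow I. WW B {j, l})"
  proof (intro sum.cong refl)
    fix B assume B: "B \<in> Pow I"
    have "finite B" using B assms(1) finite_subset by auto
    hence "WW B {j, l} = WW {j, l} B" by (simp add: WW_sym)
    also have "\<dots> = sg B j * sg B l" using False by (simp add: WW_def)
    finally show "sg B j * sg B l = WW B {j, l}" by simp
  qed
  also have "\<dots> = 0" using assms by (simp add: sum_WW)
  finally show ?thesis using False by simp
qed

lemma norm_self_inner: "norm v * norm v = v \<bullet> v"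
  by (simp add: dot_square_norm power2_eq_square)

lemma SS_sumsq:
  assumes "finite I"
  shows "(\<Sum>B\<in>Pow I. norm (SS I x B) * norm (SS I x B)) = 2 ^ card I * (\<Sum>j\<in>I. norm (x j) ^ 2)"
proof -
  have "(\<Sum>B\<in>Pow I. norm (SS I x B) * norm (SS I x B))
      = (\<Sum>B\<in>Pow I. \<Sum>j\<in>I. \<Sum>l\<in>I. (sg B j * sg B l) * (x l \<bullet> x j))"
    unfolding SS_def
    by (intro sum.cong refl)
       (simp add: norm_self_inner inner_sum_left inner_sum_right sum_distrib_left mult_ac)
  also have "\<dots> = (\<Sum>j\<in>I. \<Sum>B\<in>Pow I. \<Sum>l\<in>I. (sg B j * sg B l) * (x l \<bullet> x j))"
    by (rule sum.swap)
  also have "\<dots> = (\<Sum>j\<in>I. \<Sum>l\<in>I. \<Sum>B\<in>Pow I. (sg B j * sg B l) * (x l \<bullet> x j))"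
    by (rule sum.cong[OF refl], rule sum.swap)
  also have "\<dots> = (\<Sum>j\<in>I. \<Sum>l\<in>I. (\<Sum>B\<in>Pow I. sg B j * sg B l) * (x l \<bullet> x j))"
    by (simp only: sum_distrib_right)
  also have "\<dots> = (\<Sum>j\<in>I. \<Sum>l\<in>I. if j = l then 2 ^ card I * (x j \<bullet> x j) else 0)"
    using assms by (intro sum.cong refl) (simp add: sum_sg_sg)
  also have "\<dots> = (\<Sum>j\<in>I. 2 ^ card I * norm (x j) ^ 2)"
    using assms by (simp add: sum.delta dot_square_norm)
  finally show ?thesis by (simp add: sum_distrib_left)
qed

lemma khintchine:
  fixes x :: "'i \<Rightarrow> 'a::real_inner"
  assumes "finite I" "I \<noteq> {}"
  shows "(\<Sum>j\<in>I. norm (x j)) / sqrt (2 * card I) \<le> (\<Sum>B\<in>Pow I. norm (SS I x B)) / 2 ^ card I"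
proof -
  define f where "f B = norm (SS I x B)" for B
  define k where "k = card I"
  define E1 where "E1 = (\<Sum>B\<in>Pow I. f B) / 2 ^ k"
  define E2 where "E2 = (\<Sum>B\<in>Pow I. f B * f B) / 2 ^ k"
  have k0: "k > 0" using assms by (simp add: k_def card_gt_0_iff)
  have even: "f (I - B) = f B" if "B \<subseteq> I" for B
    using that by (simp add: f_def SS_compl)
  have c: "(\<Sum>i\<in>I. (\<Sum>B\<in>Pow I. f B * (f B - f (symd B {i}))) / 2 ^ k) \<ge> 4 * (E2 - E1^2)"
    using cube_ineq[OF assms(1), of f] even unfolding E1_def E2_def k_def by blast
  have "(\<Sum>i\<in>I. (\<Sum>B\<in>Pow I. f B * (f B - f (symd B {i}))) / 2 ^ k)
      = (\<Sum>B\<in>Pow I. \<Sum>i\<in>I. f B * (f B - f (symd B {i}))) / 2 ^ k"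
    by (simp add: sum_divide_distrib[symmetric] sum.swap[of _ I])
  also have "\<dots> \<le> (\<Sum>B\<in>Pow I. 2 * (f B * f B)) / 2 ^ k"
    by (intro divide_right_mono sum_mono) (auto simp: f_def SS_pointwise[OF assms(1)])
  also have "\<dots> = 2 * E2" by (simp add: E2_def sum_distrib_left)
  finally have h1: "E1^2 \<ge> E2 / 2" using c unfolding right_diff_distrib by linarith
  have h2: "E2 = (\<Sum>j\<in>I. norm (x j) ^ 2)"
    unfolding E2_def f_def k_def using SS_sumsq[OF assms(1), of x] by simp
  have h3: "(\<Sum>j\<in>I. norm (x j))^2 \<le> (\<Sum>j\<in>I. norm (x j) ^ 2) * k"
    unfolding k_def by (rule sum_squared_le_sum_of_squares)
  have "(\<Sum>j\<in>I. norm (x j) ^ 2) * k \<le> (2 * E1^2) * k"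
    by (rule mult_right_mono) (use h1 h2 in auto)
  hence "(\<Sum>j\<in>I. norm (x j))^2 \<le> real k * (2 * E1^2)"
    using h3 by (simp add: mult.commute)
  hence "(\<Sum>j\<in>I. norm (x j))^2 / (2 * k) \<le> E1^2"
    using k0 by (simp add: divide_le_eq algebra_simps)
  hence "sqrt ((\<Sum>j\<in>I. norm (x j))^2 / (2 * k)) \<le> sqrt (E1^2)"
    by (rule real_sqrt_le_mono)
  moreover have "E1 \<ge> 0" unfolding E1_def f_def by (simp add: sum_nonneg)
  moreover have "sqrt ((\<Sum>j\<in>I. norm (x j))^2 / (2 * k)) = (\<Sum>j\<in>I. norm (x j)) / sqrt (2 * k)"
    by (simp add: real_sqrt_divide sum_nonneg)
  ultimately show ?thesis unfolding E1_def f_def k_def by simp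
qed

lemma integrableI_sequence':
  fixes f :: "'a \<Rightarrow> 'b::{real_normed_vector, complete_space, second_countable_topology}"
    and s :: "nat \<Rightarrow> 'a \<Rightarrow> 'b"
  assumes f[measurable]: "f \<in> borel_measurable M"
  assumes s: "\<And>i. Bochner_Integration.simple_bochner_integrable M (s i)"
  assumes lim: "(\<lambda>i. \<integral>\<^sup>+x. norm (f x - s i x) \<partial>M) \<longlonglongrightarrow> 0" (is "?S \<longlonglongrightarrow> 0")
  shows "integrable M f"
proof -
  define ss where "ss = (\<lambda>n. Bochner_Integration.simple_bochner_integral M (s n))"
  have "Cauchy ss"
  proof (rule metric_CauchyI)
    fix e :: real assume "0 < e"
    then have "0 < ennreal (e / 2)" by auto
    from order_tendstoD(2)[OF lim this]
    obtain N where N: "\<And>n. N \<le> n \<Longrightarrow> ?S n < e / 2"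
      by (auto simp: eventually_sequentially)
    show "\<exists>M. \<forall>m\<ge>M. \<forall>n\<ge>M. dist (ss m) (ss n) < e"
    proof (intro exI allI impI)
      fix m n assume m: "N \<le> m" and n: "N \<le> n"
      have "norm (ss n - ss m) \<le> ?S n + ?S m"
        unfolding ss_def by (intro simple_bochner_integral_bounded s f)
      also have "\<dots> < ennreal (e / 2) + e / 2"
        by (intro add_strict_mono N n m)
      also have "\<dots> = e" using \<open>0<e\<close> by (simp flip: ennreal_plus)
      finally show "dist (ss m) (ss n) < e"
        using \<open>0<e\<close> by (simp add: dist_norm ennreal_less_iff norm_minus_commute)
    qed
  qed
  then have "\<exists>x. ss \<longlonglongrightarrow> x" using Cauchy_convergent_iff convergent_def by blast
  then obtain x where "ss \<longlonglongrightarrow> x" ..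
  then have "has_bochner_integral M f x"
    unfolding ss_def by (intro has_bochner_integral.intros[OF f s lim])
  then show ?thesis by (rule integrable.intros)
qed

lemma integrableI_bounded':
  fixes f :: "'a \<Rightarrow> 'b::{real_normed_vector, complete_space, second_countable_topology}"
  assumes f[measurable]: "f \<in> borel_measurable M" and fin: "(\<integral>\<^sup>+x. norm (f x) \<partial>M) < \<infinity>"
  shows "integrable M f"
proof -
  from borel_measurable_implies_sequence_metric[OF f, of 0] obtain s where
    s: "\<And>i. simple_function M (s i)" and
    pointwise: "\<And>x. x \<in> space M \<Longrightarrow> (\<lambda>i. s i x) \<longlonglongrightarrow> f x" and
    bound: "\<And>i x. x \<in> space M \<Longrightarrow> norm (s i x) \<le> 2 * norm (f x)"
    by simp metis
  show ?thesis
  proof (rule integrableI_sequence')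
    { fix i
      have "(\<integral>\<^sup>+x. norm (s i x) \<partial>M) \<le> (\<integral>\<^sup>+x. ennreal (2 * norm (f x)) \<partial>M)"
        by (intro nn_integral_mono) (simp add: bound)
      also have "\<dots> = 2 * (\<integral>\<^sup>+x. ennreal (norm (f x)) \<partial>M)"
        by (simp add: ennreal_mult nn_integral_cmult)
      also have "\<dots> < top"
        using fin by (simp add: ennreal_mult_less_top)
      finally have "(\<integral>\<^sup>+x. norm (s i x) \<partial>M) < \<infinity>"
        by simp }
    note fin_s = this
    show "\<And>i. Bochner_Integration.simple_bochner_integrable M (s i)"
      by (rule simple_bochner_integrableI_bounded[OF s fin_s])
    show "(\<lambda>i. \<integral>\<^sup>+ x. ennreal (norm (f x - s i x)) \<partial>M) \<longlonglongrightarrow> 0"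
    proof (rule nn_integral_dominated_convergence_norm)
      show "\<And>j. AE x in M. norm (s j x) \<le> 2 * norm (f x)"
        using bound by auto
      show "\<And>i. s i \<in> borel_measurable M" "(\<lambda>x. 2 * norm (f x)) \<in> borel_measurable M"
        using s by (auto intro: borel_measurable_simple_function)
      show "(\<integral>\<^sup>+ x. ennreal (2 * norm (f x)) \<partial>M) < \<infinity>"
        using fin by (simp add: nn_integral_cmult ennreal_mult ennreal_mult_less_top)
      show "AE x in M. (\<lambda>i. s i x) \<longlonglongrightarrow> f x"
        using pointwise by auto
    qed fact
  qed fact
qed


lemma pps: "prob_space M \<Longrightarrow> product_prob_space (\<lambda>_. M)"
  by (simp add: product_prob_space_def product_prob_space_axioms_def product_sigma_finite_def
      prob_space_imp_sigma_finite)

lemma comp_distr: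
  assumes "prob_space M" "i \<in> J"
  shows "distr (PiM J (\<lambda>_. M)) M (\<lambda>\<omega>. \<omega> i) = M"
proof -
  interpret product_prob_space "\<lambda>_. M" J by (rule pps[OF assms(1)])
  show ?thesis using PiM_component[OF assms(2)] by simp
qed

lemma comp_meas:
  assumes "sets M = sets borel" "i \<in> J"
  shows "(\<lambda>\<omega>. \<omega> i) \<in> borel_measurable (PiM J (\<lambda>_. M))"
proof -
  have "(\<lambda>\<omega>. \<omega> i) \<in> measurable (PiM J (\<lambda>_. M)) M"
    using measurable_component_singleton[OF assms(2), of "\<lambda>_. M"] by simp
  thus ?thesis using measurable_cong_sets[OF refl assms(1)] by blast
qed

context
  fixes M :: "'a::{real_inner, complete_space, second_countable_topology} measure"
  assumes PM: "prob_space M" and SM: "sets M = sets borel"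
    and IM: "integrable M norm" and ZM: "(\<integral>x. x \<partial>M) = 0"
begin

lemma idmeas: "(\<lambda>x. x) \<in> borel_measurable M" by (rule measurable_ident_sets[OF SM])

lemma intM: "integrable M (\<lambda>x. x)"
proof (rule integrableI_bounded'[OF idmeas])
  have "(\<integral>\<^sup>+x. ennreal (norm x) \<partial>M) \<noteq> \<infinity>" using integrableD(2)[OF IM] by simp
  thus "(\<integral>\<^sup>+x. ennreal (norm x) \<partial>M) < \<infinity>" by (simp add: less_top)
qed

lemma inner_zero: "(\<integral>x. x \<bullet> v \<partial>M) = 0"
  using integral_inner_left[of v M "\<lambda>x. x"] intM ZM by simp

lemma comp_integrable:
  fixes g :: "'a \<Rightarrow> real"
  assumes "i \<in> J" "integrable M g"
  shows "integrable (PiM J (\<lambda>_. M)) (\<lambda>\<omega>. g (\<omega> i))"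
proof -
  have "integrable (distr (PiM J (\<lambda>_. M)) M (\<lambda>\<omega>. \<omega> i)) g"
    using comp_distr[OF PM assms(1)] assms(2) by simp
  thus ?thesis
    by (subst (asm) integrable_distr_eq) (auto simp: measurable_component_singleton assms borel_measurable_integrable)
qed

lemma comp_integral:
  fixes g :: "'a \<Rightarrow> real"
  assumes "i \<in> J" "g \<in> borel_measurable M"
  shows "(\<integral>\<omega>. g (\<omega> i) \<partial>PiM J (\<lambda>_. M)) = (\<integral>x. g x \<partial>M)"
proof -
  have "(\<integral>x. g x \<partial>M) = (\<integral>x. g x \<partial>distr (PiM J (\<lambda>_. M)) M (\<lambda>\<omega>. \<omega> i))"
    using comp_distr[OF PM assms(1)] by simp
  also have "\<dots> = (\<integral>\<omega>. g (\<omega> i) \<partial>PiM J (\<lambda>_. M))"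
    by (rule integral_distr) (auto simp: measurable_component_singleton assms)
  finally show ?thesis by simp
qed

lemma normM_meas: "(\<lambda>x. norm x) \<in> borel_measurable M"
  using idmeas by measurable

lemma innerM_meas: "(\<lambda>x. x \<bullet> v) \<in> borel_measurable M"
  using idmeas by measurable

lemma lin_meas:
  assumes "A \<subseteq> J"
  shows "(\<lambda>\<omega>. b + (\<Sum>i\<in>A. c i *\<^sub>R \<omega> i)) \<in> borel_measurable (PiM J (\<lambda>_. M))"
proof -
  have "\<And>i. i \<in> A \<Longrightarrow> (\<lambda>\<omega>. \<omega> i) \<in> borel_measurable (PiM J (\<lambda>_. M))"
    using assms by (auto intro!: comp_meas[OF SM])
  then show ?thesis by measurable
qed

lemma normlin_integrable:
  assumes "finite A" "A \<subseteq> J"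
  shows "integrable (PiM J (\<lambda>_. M)) (\<lambda>\<omega>. norm (b + (\<Sum>i\<in>A. c i *\<^sub>R \<omega> i)))"
proof -
  interpret Q: prob_space "PiM J (\<lambda>_. M)" by (rule prob_space_PiM) (rule PM)
  have ib: "integrable (PiM J (\<lambda>_. M)) (\<lambda>\<omega>. norm b + (\<Sum>i\<in>A. \<bar>c i\<bar> * norm (\<omega> i)))"
  proof (rule Bochner_Integration.integrable_add)
    show "integrable (PiM J (\<lambda>_. M)) (\<lambda>\<omega>. norm b)" by (rule Q.integrable_const)
    show "integrable (PiM J (\<lambda>_. M)) (\<lambda>\<omega>. \<Sum>i\<in>A. \<bar>c i\<bar> * norm (\<omega> i))"
    proof (rule Bochner_Integration.integrable_sum)
      fix i assume "i \<in> A"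
      hence "integrable (PiM J (\<lambda>_. M)) (\<lambda>\<omega>. norm (\<omega> i))"
        using assms IM by (intro comp_integrable) auto
      thus "integrable (PiM J (\<lambda>_. M)) (\<lambda>\<omega>. \<bar>c i\<bar> * norm (\<omega> i))"
        by (rule integrable_mult_right)
    qed
  qed
  have m: "(\<lambda>\<omega>. norm (b + (\<Sum>i\<in>A. c i *\<^sub>R \<omega> i))) \<in> borel_measurable (PiM J (\<lambda>_. M))"
    using lin_meas[OF assms(2)] by measurable
  show ?thesis
  proof (rule Bochner_Integration.integrable_bound[OF ib m])
    show "AE \<omega> in PiM J (\<lambda>_. M). norm (norm (b + (\<Sum>i\<in>A. c i *\<^sub>R \<omega> i))) \<le> norm (norm b + (\<Sum>i\<in>A. \<bar>c i\<bar> * norm (\<omega> i)))"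
    proof (rule AE_I2)
      fix \<omega>
      have "norm (b + (\<Sum>i\<in>A. c i *\<^sub>R \<omega> i)) \<le> norm b + norm (\<Sum>i\<in>A. c i *\<^sub>R \<omega> i)"
        by (rule norm_triangle_ineq)
      also have "norm (\<Sum>i\<in>A. c i *\<^sub>R \<omega> i) \<le> (\<Sum>i\<in>A. norm (c i *\<^sub>R \<omega> i))"
        by (rule norm_sum)
      finally have "norm (b + (\<Sum>i\<in>A. c i *\<^sub>R \<omega> i)) \<le> norm b + (\<Sum>i\<in>A. \<bar>c i\<bar> * norm (\<omega> i))"
        by simp
      moreover have "0 \<le> norm b + (\<Sum>i\<in>A. \<bar>c i\<bar> * norm (\<omega> i))"
        by (intro add_nonneg_nonneg sum_nonneg) auto
      ultimately show "norm (norm (b + (\<Sum>i\<in>A. c i *\<^sub>R \<omega> i))) \<le> norm (norm b + (\<Sum>i\<in>A. \<bar>c i\<bar> * norm (\<omega> i)))"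
        by simp
    qed
  qed
qed

lemma inner_bound:
  assumes "finite J"
  shows "ennreal (norm a) \<le> (\<integral>\<^sup>+ \<omega>. ennreal (norm (a + (\<Sum>i\<in>J. \<omega> i))) \<partial>PiM J (\<lambda>_. M))"
proof (cases "a = 0")
  case True then show ?thesis by simp
next
  case False
  interpret Q: prob_space "PiM J (\<lambda>_. M)" by (rule prob_space_PiM) (rule PM)
  define u where "u = (1 / norm a) *\<^sub>R a"
  have nu: "norm u = 1" using False by (simp add: u_def)
  have au: "a \<bullet> u = norm a" using False
    by (simp add: u_def dot_square_norm power2_eq_square)
  have int1: "integrable (PiM J (\<lambda>_. M)) (\<lambda>\<omega>. norm (a + (\<Sum>i\<in>J. 1 *\<^sub>R \<omega> i)))"
    by (rule normlin_integrable[OF assms order_refl])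
  have int2: "integrable (PiM J (\<lambda>_. M)) (\<lambda>\<omega>. norm a + (\<Sum>i\<in>J. \<omega> i \<bullet> u))"
  proof (rule Bochner_Integration.integrable_add[OF Q.integrable_const Bochner_Integration.integrable_sum])
    fix i assume "i \<in> J"
    then show "integrable (PiM J (\<lambda>_. M)) (\<lambda>\<omega>. \<omega> i \<bullet> u)"
      using intM by (intro comp_integrable) auto
  qed
  have eqn: "(\<integral>\<omega>. norm a + (\<Sum>i\<in>J. \<omega> i \<bullet> u) \<partial>PiM J (\<lambda>_. M)) = norm a"
  proof -
    have "(\<integral>\<omega>. norm a + (\<Sum>i\<in>J. \<omega> i \<bullet> u) \<partial>PiM J (\<lambda>_. M))
        = norm a + (\<Sum>i\<in>J. \<integral>\<omega>. \<omega> i \<bullet> u \<partial>PiM J (\<lambda>_. M))"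
    proof -
      have ii: "\<And>i. i \<in> J \<Longrightarrow> integrable (PiM J (\<lambda>_. M)) (\<lambda>\<omega>. \<omega> i \<bullet> u)"
        using intM by (intro comp_integrable) auto
      show ?thesis
        using ii by (subst Bochner_Integration.integral_add) (auto intro!: Bochner_Integration.integrable_sum simp: Bochner_Integration.integral_sum[OF ii] Q.prob_space)
    qed
    also have "(\<Sum>i\<in>J. \<integral>\<omega>. \<omega> i \<bullet> u \<partial>PiM J (\<lambda>_. M)) = (\<Sum>i\<in>J. 0)"
      using comp_integral[OF _ innerM_meas, of _ J u] inner_zero by (intro sum.cong refl) simp
    finally show ?thesis by simp
  qed
  have "(\<integral>\<omega>. norm a + (\<Sum>i\<in>J. \<omega> i \<bullet> u) \<partial>PiM J (\<lambda>_. M)) \<le> (\<integral>\<omega>. norm (a + (\<Sum>i\<in>J. 1 *\<^sub>R \<omega> i)) \<partial>PiM J (\<lambda>_. M))"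
  proof (rule integral_mono[OF int2 int1])
    fix \<omega>
    have "(a + (\<Sum>i\<in>J. \<omega> i)) \<bullet> u \<le> norm (a + (\<Sum>i\<in>J. \<omega> i)) * norm u"
      by (rule norm_cauchy_schwarz)
    then show "norm a + (\<Sum>i\<in>J. \<omega> i \<bullet> u) \<le> norm (a + (\<Sum>i\<in>J. 1 *\<^sub>R \<omega> i))"
      using nu au by (simp add: inner_add_left inner_sum_left)
  qed
  then have "norm a \<le> (\<integral>\<omega>. norm (a + (\<Sum>i\<in>J. 1 *\<^sub>R \<omega> i)) \<partial>PiM J (\<lambda>_. M))" using eqn by simp
  moreover have "(\<integral>\<^sup>+ \<omega>. ennreal (norm (a + (\<Sum>i\<in>J. 1 *\<^sub>R \<omega> i))) \<partial>PiM J (\<lambda>_. M))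
      = ennreal (\<integral>\<omega>. norm (a + (\<Sum>i\<in>J. 1 *\<^sub>R \<omega> i)) \<partial>PiM J (\<lambda>_. M))"
    by (rule nn_integral_eq_integral[OF int1]) auto
  ultimately show ?thesis by (simp add: ennreal_leI)
qed

lemma sum_meas:
  assumes "A \<subseteq> J"
  shows "(\<lambda>\<omega>. \<Sum>i\<in>A. \<omega> i) \<in> borel_measurable (PiM J (\<lambda>_. M))"
proof -
  have "\<And>i. i \<in> A \<Longrightarrow> (\<lambda>\<omega>. \<omega> i) \<in> borel_measurable (PiM J (\<lambda>_. M))"
    using assms by (auto intro!: comp_meas[OF SM])
  then show ?thesis by measurable
qed

lemma normsum_integrable:
  assumes "finite A" "A \<subseteq> J"
  shows "integrable (PiM J (\<lambda>_. M)) (\<lambda>\<omega>. norm (\<Sum>i\<in>A. \<omega> i))"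
  using normlin_integrable[OF assms, of 0 "\<lambda>_. 1"] by simp

lemma subset_mono:
  assumes "finite I" "A \<subseteq> I"
  shows "(\<integral>\<omega>. norm (\<Sum>i\<in>A. \<omega> i) \<partial>PiM I (\<lambda>_. M)) \<le> (\<integral>\<omega>. norm (\<Sum>i\<in>I. \<omega> i) \<partial>PiM I (\<lambda>_. M))"
proof -
  interpret product_prob_space "\<lambda>_. M" I by (rule pps[OF PM])
  define J where "J = I - A"
  have IJ: "I = A \<union> J" "A \<inter> J = {}" "finite A" "finite J"
    using assms finite_subset by (auto simp: J_def)
  interpret QJ: prob_space "PiM J (\<lambda>_. M)" by (rule prob_space_PiM) (rule PM)
  have m1': "(\<lambda>\<omega>. ennreal (norm (\<Sum>i\<in>I. \<omega> i))) \<in> borel_measurable (PiM I (\<lambda>_. M))"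
    using sum_meas[OF order_refl, of I] by measurable
  have m1: "(\<lambda>\<omega>. ennreal (norm (\<Sum>i\<in>I. \<omega> i))) \<in> borel_measurable (PiM (A \<union> J) (\<lambda>_. M))"
    using m1' by (simp add: IJ(1)[symmetric])
  have m2: "(\<lambda>\<omega>. ennreal (norm (\<Sum>i\<in>A. \<omega> i))) \<in> borel_measurable (PiM (A \<union> J) (\<lambda>_. M))"
    using sum_meas[of A "A \<union> J"] by measurable
  have "(\<integral>\<^sup>+\<omega>. ennreal (norm (\<Sum>i\<in>A. \<omega> i)) \<partial>PiM I (\<lambda>_. M))
      = (\<integral>\<^sup>+x. (\<integral>\<^sup>+y. ennreal (norm (\<Sum>i\<in>A. merge A J (x, y) i)) \<partial>PiM J (\<lambda>_. M)) \<partial>PiM A (\<lambda>_. M))"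
    unfolding IJ(1) by (rule product_nn_integral_fold[OF IJ(2,3,4) m2])
  also have "\<dots> = (\<integral>\<^sup>+x. ennreal (norm (\<Sum>i\<in>A. x i)) \<partial>PiM A (\<lambda>_. M))"
  proof (rule nn_integral_cong)
    fix x
    have "(\<integral>\<^sup>+y. ennreal (norm (\<Sum>i\<in>A. merge A J (x, y) i)) \<partial>PiM J (\<lambda>_. M))
        = (\<integral>\<^sup>+y. ennreal (norm (\<Sum>i\<in>A. x i)) \<partial>PiM J (\<lambda>_. M))"
      using IJ(2) by (intro nn_integral_cong) (simp cong: sum.cong)
    also have "\<dots> = ennreal (norm (\<Sum>i\<in>A. x i))"
      by (simp add: QJ.emeasure_space_1)
    finally show "(\<integral>\<^sup>+y. ennreal (norm (\<Sum>i\<in>A. merge A J (x, y) i)) \<partial>PiM J (\<lambda>_. M))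
        = ennreal (norm (\<Sum>i\<in>A. x i))" .
  qed
  also have "\<dots> \<le> (\<integral>\<^sup>+x. (\<integral>\<^sup>+y. ennreal (norm (\<Sum>i\<in>I. merge A J (x, y) i)) \<partial>PiM J (\<lambda>_. M)) \<partial>PiM A (\<lambda>_. M))"
  proof (rule nn_integral_mono)
    fix x
    have "(\<integral>\<^sup>+y. ennreal (norm (\<Sum>i\<in>I. merge A J (x, y) i)) \<partial>PiM J (\<lambda>_. M))
        = (\<integral>\<^sup>+y. ennreal (norm ((\<Sum>i\<in>A. x i) + (\<Sum>i\<in>J. y i))) \<partial>PiM J (\<lambda>_. M))"
    proof (intro nn_integral_cong)
      fix y
      have "(\<Sum>i\<in>I. merge A J (x, y) i) = (\<Sum>i\<in>A. merge A J (x, y) i) + (\<Sum>i\<in>J. merge A J (x, y) i)"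
        unfolding IJ(1) by (rule sum.union_disjoint[OF IJ(3,4,2)])
      also have "\<dots> = (\<Sum>i\<in>A. x i) + (\<Sum>i\<in>J. y i)"
        using IJ(2) by (simp cong: sum.cong)
      finally show "ennreal (norm (\<Sum>i\<in>I. merge A J (x, y) i)) = ennreal (norm ((\<Sum>i\<in>A. x i) + (\<Sum>i\<in>J. y i)))"
        by simp
    qed
    moreover have "ennreal (norm (\<Sum>i\<in>A. x i)) \<le> (\<integral>\<^sup>+y. ennreal (norm ((\<Sum>i\<in>A. x i) + (\<Sum>i\<in>J. y i))) \<partial>PiM J (\<lambda>_. M))"
      by (rule inner_bound[OF IJ(4)])
    ultimately show "ennreal (norm (\<Sum>i\<in>A. x i)) \<le> (\<integral>\<^sup>+y. ennreal (norm (\<Sum>i\<in>I. merge A J (x, y) i)) \<partial>PiM J (\<lambda>_. M))"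
      by simp
  qed
  also have "\<dots> = (\<integral>\<^sup>+\<omega>. ennreal (norm (\<Sum>i\<in>I. \<omega> i)) \<partial>PiM I (\<lambda>_. M))"
    using product_nn_integral_fold[OF IJ(2,3,4) m1] by (simp add: IJ(1)[symmetric])
  finally have le: "(\<integral>\<^sup>+\<omega>. ennreal (norm (\<Sum>i\<in>A. \<omega> i)) \<partial>PiM I (\<lambda>_. M))
      \<le> (\<integral>\<^sup>+\<omega>. ennreal (norm (\<Sum>i\<in>I. \<omega> i)) \<partial>PiM I (\<lambda>_. M))" .
  have e1: "(\<integral>\<^sup>+\<omega>. ennreal (norm (\<Sum>i\<in>A. \<omega> i)) \<partial>PiM I (\<lambda>_. M)) = ennreal (\<integral>\<omega>. norm (\<Sum>i\<in>A. \<omega> i) \<partial>PiM I (\<lambda>_. M))"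
    by (rule nn_integral_eq_integral[OF normsum_integrable[OF IJ(3) assms(2)]]) auto
  have e2: "(\<integral>\<^sup>+\<omega>. ennreal (norm (\<Sum>i\<in>I. \<omega> i)) \<partial>PiM I (\<lambda>_. M)) = ennreal (\<integral>\<omega>. norm (\<Sum>i\<in>I. \<omega> i) \<partial>PiM I (\<lambda>_. M))"
    by (rule nn_integral_eq_integral[OF normsum_integrable[OF assms(1) order_refl]]) auto
  have "0 \<le> (\<integral>\<omega>. norm (\<Sum>i\<in>I. \<omega> i) \<partial>PiM I (\<lambda>_. M))" by simp
  then show ?thesis using le e1 e2 by (simp add: ennreal_le_iff)
qed

lemma SS_integrable:
  assumes "finite I"
  shows "integrable (PiM I (\<lambda>_. M)) (\<lambda>\<omega>. norm (SS I \<omega> B))"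
  using normlin_integrable[OF assms order_refl, of 0 "sg B"] by (simp add: SS_def)

lemma symm_bound:
  assumes "finite I" "B \<subseteq> I"
  shows "(\<integral>\<omega>. norm (SS I \<omega> B) \<partial>PiM I (\<lambda>_. M)) \<le> 2 * (\<integral>\<omega>. norm (\<Sum>i\<in>I. \<omega> i) \<partial>PiM I (\<lambda>_. M))"
proof -
  have fB: "finite B" using assms finite_subset by auto
  have i1: "integrable (PiM I (\<lambda>_. M)) (\<lambda>\<omega>. norm (\<Sum>i\<in>I-B. \<omega> i))"
    using normsum_integrable[of "I - B" I] assms by auto
  have i2: "integrable (PiM I (\<lambda>_. M)) (\<lambda>\<omega>. norm (\<Sum>i\<in>B. \<omega> i))"
    using normsum_integrable[OF fB assms(2)] .
  have "(\<integral>\<omega>. norm (SS I \<omega> B) \<partial>PiM I (\<lambda>_. M))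
      \<le> (\<integral>\<omega>. norm (\<Sum>i\<in>I-B. \<omega> i) + norm (\<Sum>i\<in>B. \<omega> i) \<partial>PiM I (\<lambda>_. M))"
  proof (rule integral_mono[OF SS_integrable[OF assms(1)] Bochner_Integration.integrable_add[OF i1 i2]])
    fix \<omega> :: "_ \<Rightarrow> 'a"
    have "SS I \<omega> B = (\<Sum>j\<in>I-B. sg B j *\<^sub>R \<omega> j) + (\<Sum>j\<in>B. sg B j *\<^sub>R \<omega> j)"
      unfolding SS_def by (rule sum.subset_diff[OF assms(2,1)])
    also have "\<dots> = (\<Sum>j\<in>I-B. \<omega> j) - (\<Sum>j\<in>B. \<omega> j)"
      by (simp add: sg_def sum_negf[symmetric])
    finally show "norm (SS I \<omega> B) \<le> norm (\<Sum>i\<in>I-B. \<omega> i) + norm (\<Sum>i\<in>B. \<omega> i)"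
      by (simp add: norm_triangle_ineq4)
  qed
  also have "\<dots> = (\<integral>\<omega>. norm (\<Sum>i\<in>I-B. \<omega> i) \<partial>PiM I (\<lambda>_. M)) + (\<integral>\<omega>. norm (\<Sum>i\<in>B. \<omega> i) \<partial>PiM I (\<lambda>_. M))"
    by (rule Bochner_Integration.integral_add[OF i1 i2])
  also have "\<dots> \<le> (\<integral>\<omega>. norm (\<Sum>i\<in>I. \<omega> i) \<partial>PiM I (\<lambda>_. M)) + (\<integral>\<omega>. norm (\<Sum>i\<in>I. \<omega> i) \<partial>PiM I (\<lambda>_. M))"
    using assms by (intro add_mono subset_mono) auto
  finally show ?thesis by simp
qed

lemma prod_bound:
  assumes "finite I" "I \<noteq> {}"
  shows "card I * (\<integral>x. norm x \<partial>M) / (2 * sqrt (2 * card I)) \<le> (\<integral>\<omega>. norm (\<Sum>i\<in>I. \<omega> i) \<partial>PiM I (\<lambda>_. M))"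
proof -
  define k where "k = card I"
  define E where "E = (\<integral>x. norm x \<partial>M)"
  define T where "T = (\<integral>\<omega>. norm (\<Sum>i\<in>I. \<omega> i) \<partial>PiM I (\<lambda>_. M))"
  define c where "c = (2::real) ^ k / sqrt (2 * k)"
  have k0: "k > 0" using assms by (simp add: k_def card_gt_0_iff)
  have h1: "(\<Sum>B\<in>Pow I. \<integral>\<omega>. norm (SS I \<omega> B) \<partial>PiM I (\<lambda>_. M)) \<le> (\<Sum>B\<in>Pow I. 2 * T)"
    unfolding T_def by (intro sum_mono symm_bound[OF assms(1)]) auto
  have h2: "(\<Sum>B\<in>Pow I. \<integral>\<omega>. norm (SS I \<omega> B) \<partial>PiM I (\<lambda>_. M))
      = (\<integral>\<omega>. (\<Sum>B\<in>Pow I. norm (SS I \<omega> B)) \<partial>PiM I (\<lambda>_. M))"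
    by (rule Bochner_Integration.integral_sum[symmetric]) (rule SS_integrable[OF assms(1)])
  have ic: "integrable (PiM I (\<lambda>_. M)) (\<lambda>\<omega>. c * (\<Sum>j\<in>I. norm (\<omega> j)))"
    using IM by (intro integrable_mult_right Bochner_Integration.integrable_sum comp_integrable) auto
  have iS: "integrable (PiM I (\<lambda>_. M)) (\<lambda>\<omega>. (\<Sum>B\<in>Pow I. norm (SS I \<omega> B)))"
    by (intro Bochner_Integration.integrable_sum SS_integrable[OF assms(1)])
  have h3: "(\<integral>\<omega>. c * (\<Sum>j\<in>I. norm (\<omega> j)) \<partial>PiM I (\<lambda>_. M)) \<le> (\<integral>\<omega>. (\<Sum>B\<in>Pow I. norm (SS I \<omega> B)) \<partial>PiM I (\<lambda>_. M))"
  proof (rule integral_mono[OF ic iS])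
    fix \<omega> :: "_ \<Rightarrow> 'a"
    have "(\<Sum>j\<in>I. norm (\<omega> j)) / sqrt (2 * k) \<le> (\<Sum>B\<in>Pow I. norm (SS I \<omega> B)) / 2 ^ k"
      using khintchine[OF assms, of \<omega>] by (simp add: k_def)
    then show "c * (\<Sum>j\<in>I. norm (\<omega> j)) \<le> (\<Sum>B\<in>Pow I. norm (SS I \<omega> B))"
      by (simp add: c_def field_simps)
  qed
  have h4: "(\<integral>\<omega>. c * (\<Sum>j\<in>I. norm (\<omega> j)) \<partial>PiM I (\<lambda>_. M)) = c * (k * E)"
  proof -
    have "(\<integral>\<omega>. c * (\<Sum>j\<in>I. norm (\<omega> j)) \<partial>PiM I (\<lambda>_. M)) = c * (\<Sum>j\<in>I. \<integral>\<omega>. norm (\<omega> j) \<partial>PiM I (\<lambda>_. M))"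
      using IM by (simp add: Bochner_Integration.integral_sum comp_integrable)
    also have "\<dots> = c * (\<Sum>j\<in>I. E)"
      unfolding E_def by (intro arg_cong[where f="\<lambda>x. c * x"] sum.cong refl comp_integral normM_meas) auto
    finally show ?thesis by (simp add: k_def)
  qed
  have h5: "(\<Sum>B\<in>Pow I. 2 * T) = 2 ^ k * (2 * T)"
    using assms(1) by (simp add: card_Pow k_def)
  have "c * (k * E) \<le> 2 ^ k * (2 * T)"
    using h1 h2 h3 h4 h5 by linarith
  moreover have "c * (k * E) = 2 ^ k * (k * E / sqrt (2 * k))" by (simp add: c_def)
  ultimately have "2 ^ k * (k * E / sqrt (2 * k)) \<le> 2 ^ k * (2 * T)" by simp
  hence "k * E / sqrt (2 * k) \<le> 2 * T" by (rule mult_left_le_imp_le) simp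
  hence "(k * E / sqrt (2 * k)) / 2 \<le> (2 * T) / 2" by (rule divide_right_mono) simp
  moreover have "k * E / (2 * sqrt (2 * k)) = (k * E / sqrt (2 * k)) / 2" by simp
  ultimately have "k * E / (2 * sqrt (2 * k)) \<le> T" by simp
  then show ?thesis by (simp add: k_def E_def T_def)
qed

end

lemma emp_eq:
  fixes x :: "nat \<Rightarrow> 'a::topological_space"
  assumes "n \<ge> 1"
  shows "empirical_measure n x = distr (measure_pmf (pmf_of_set {..<n})) borel x"
proof -
  have ne: "{..<n} \<noteq> {}" using assms by (auto simp: lessThan_empty_iff)
  let ?N = "distr (measure_pmf (pmf_of_set {..<n})) borel x"
  have "?N = measure_of (space ?N) (sets ?N) (emeasure ?N)" by (rule measure_of_of_measure[symmetric])
  also have "\<dots> = measure_of UNIV (sets borel) (emeasure ?N)" by simp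
  also have "\<dots> = empirical_measure n x"
    unfolding empirical_measure_def
  proof (rule measure_of_eq)
    show "sets borel \<subseteq> Pow UNIV" by simp
    fix a :: "'a set" assume a: "a \<in> sigma_sets UNIV (sets borel)"
    hence a': "a \<in> sets borel" by (metis space_borel sets.sigma_sets_eq)
    have "emeasure ?N a = emeasure (measure_pmf (pmf_of_set {..<n})) (x -` a)"
      using a' by (simp add: emeasure_distr)
    also have "\<dots> = ennreal (real (card ({..<n} \<inter> x -` a)) / real n)"
      using emeasure_pmf_of_set[OF ne, of "x -` a"] by simp
    also have "{..<n} \<inter> x -` a = {i\<in>{..<n}. x i \<in> a}" by auto
    finally show "emeasure ?N a = ennreal (real (card {i\<in>{..<n}. x i \<in> a}) / real n)" .
  qed
  finally show ?thesis by simp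
qed

lemma W1_lower:
  assumes P: "integrable P (\<lambda>t. t)" and Q: "integrable Q (\<lambda>t. t)"
  shows "ennreal ((\<integral>t. t \<partial>Q) - (\<integral>t. t \<partial>P)) \<le> W1 P Q"
  unfolding W1_def
proof (rule INF_greatest)
  fix \<pi> :: "(real \<times> real) measure"
  assume "\<pi> \<in> {\<pi> :: (real \<times> real) measure.
       sets \<pi> = sets (borel :: (real \<times> real) measure) \<and>
       distr \<pi> borel fst = P \<and> distr \<pi> borel snd = Q}"
  hence s: "sets \<pi> = sets (borel :: (real \<times> real) measure)"
    and d1: "distr \<pi> borel fst = P" and d2: "distr \<pi> borel snd = Q" by auto
  have mf: "fst \<in> borel_measurable \<pi>" unfolding measurable_cong_sets[OF s refl]
    by (intro borel_measurable_continuous_onI continuous_on_fst continuous_on_id)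
  have ms: "snd \<in> borel_measurable \<pi>" unfolding measurable_cong_sets[OF s refl]
    by (intro borel_measurable_continuous_onI continuous_on_snd continuous_on_id)
  have idm: "(\<lambda>t::real. t) \<in> borel_measurable borel" by simp
  have i1: "integrable \<pi> fst"
  proof -
    have "integrable (distr \<pi> borel fst) (\<lambda>t. t)" using P d1 by simp
    thus ?thesis using integrable_distr_eq[OF mf idm] by simp
  qed
  have i2: "integrable \<pi> snd"
  proof -
    have "integrable (distr \<pi> borel snd) (\<lambda>t. t)" using Q d2 by simp
    thus ?thesis using integrable_distr_eq[OF ms idm] by simp
  qed
  have e1: "(\<integral>z. fst z \<partial>\<pi>) = (\<integral>t. t \<partial>P)"
    using integral_distr[OF mf idm] d1 by simp
  have e2: "(\<integral>z. snd z \<partial>\<pi>) = (\<integral>t. t \<partial>Q)"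
    using integral_distr[OF ms idm] d2 by simp
  have i3: "integrable \<pi> (\<lambda>z. \<bar>fst z - snd z\<bar>)"
    using i1 i2 by (intro integrable_abs Bochner_Integration.integrable_diff)
  have "(\<integral>t. t \<partial>Q) - (\<integral>t. t \<partial>P) = (\<integral>z. snd z - fst z \<partial>\<pi>)"
    using e1 e2 i1 i2 by simp
  also have "\<dots> \<le> (\<integral>z. \<bar>fst z - snd z\<bar> \<partial>\<pi>)"
    using i1 i2 i3 by (intro integral_mono) auto
  finally have "ennreal ((\<integral>t. t \<partial>Q) - (\<integral>t. t \<partial>P)) \<le> ennreal (\<integral>z. \<bar>fst z - snd z\<bar> \<partial>\<pi>)"
    by (rule ennreal_leI)
  also have "\<dots> = (\<integral>\<^sup>+ z. ennreal \<bar>fst z - snd z\<bar> \<partial>\<pi>)"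
    by (rule nn_integral_eq_integral[OF i3, symmetric]) auto
  finally show "ennreal ((\<integral>t. t \<partial>Q) - (\<integral>t. t \<partial>P)) \<le> (\<integral>\<^sup>+ z. ennreal \<bar>fst z - snd z\<bar> \<partial>\<pi>)" by simp
qed

theorem corollary2p11:
  fixes M :: "'a::{real_inner, complete_space, second_countable_topology} measure"
    and P :: "'w measure"
    and X :: "nat \<Rightarrow> 'w \<Rightarrow> 'a"
    and n :: nat
  assumes "prob_space M" and "sets M = sets borel"
    and "integrable M norm"
    and "(\<integral>x. x \<partial>M) = 0"
    and "n \<ge> 1"
    and "prob_space P"
    and "\<And>i. i < n \<Longrightarrow> X i \<in> borel_measurable P"
    and "prob_space.indep_vars P (\<lambda>_. borel) X {..<n}"
    and "\<And>i. i < n \<Longrightarrow> distr P borel (X i) = M"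
  shows "(\<integral>\<^sup>+ \<omega>. W11 M (empirical_measure n (\<lambda>i. X i \<omega>)) \<partial>P)
           \<ge> ennreal (1 / (2 * sqrt (2 * real n)) * (\<integral>x. norm x \<partial>M))"
proof -
  note PM = assms(1) and SM = assms(2) and IM = assms(3) and ZM = assms(4)
  note ctx = PM SM IM ZM
  define I where "I = {..<n}"
  have fI: "finite I" by (simp add: I_def)
  have neI: "I \<noteq> {}" using assms(5) by (auto simp: I_def lessThan_empty_iff)
  have cI: "card I = n" by (simp add: I_def)
  have n0: "real n > 0" using assms(5) by simp
  interpret P: prob_space P by (rule assms(6))
  define S where "S \<omega> = (\<Sum>i\<in>I. X i \<omega>)" for \<omega>
  have idm: "(\<lambda>t::real. t) \<in> borel_measurable borel" by simp
  have pw: "ennreal (norm (S \<omega>) / real n) \<le> W11 M (empirical_measure n (\<lambda>i. X i \<omega>))" for \<omega>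
  proof (cases "S \<omega> = 0")
    case True thus ?thesis by simp
  next
    case False
    define v where "v = (1 / norm (S \<omega>)) *\<^sub>R S \<omega>"
    have nv: "norm v \<le> 1" using False by (simp add: v_def)
    have Sv: "S \<omega> \<bullet> v = norm (S \<omega>)" using False
      by (simp add: v_def dot_square_norm power2_eq_square)
    have gm: "(\<lambda>x::'a. x \<bullet> v) \<in> borel_measurable borel"
      by (intro borel_measurable_continuous_onI continuous_intros)
    have gmM: "(\<lambda>x. x \<bullet> v) \<in> borel_measurable M" by (rule innerM_meas[OF ctx])
    have intv: "integrable M (\<lambda>x. x \<bullet> v)" using intM[OF ctx] by (rule integrable_inner_left)
    let ?P1 = "distr M borel (\<lambda>x. x \<bullet> v)"
    have i1: "integrable ?P1 (\<lambda>t. t)"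
      using integrable_distr_eq[OF gmM idm] intv by simp
    have e1: "(\<integral>t. t \<partial>?P1) = 0"
      using integral_distr[OF gmM idm] inner_zero[OF ctx] by simp
    define Q1 where "Q1 = distr (measure_pmf (pmf_of_set I)) borel (\<lambda>i. X i \<omega> \<bullet> v)"
    have emp: "empirical_measure n (\<lambda>i. X i \<omega>) = distr (measure_pmf (pmf_of_set I)) borel (\<lambda>i. X i \<omega>)"
      unfolding I_def by (rule emp_eq[OF assms(5)])
    have Q1eq: "distr (empirical_measure n (\<lambda>i. X i \<omega>)) borel (\<lambda>x. x \<bullet> v) = Q1"
      unfolding emp Q1_def by (subst distr_distr[OF gm]) (auto simp: comp_def)
    have hm: "(\<lambda>i. X i \<omega> \<bullet> v) \<in> measurable (measure_pmf (pmf_of_set I)) borel" by simp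
    have i2: "integrable Q1 (\<lambda>t. t)"
      unfolding Q1_def using integrable_distr_eq[OF hm idm]
      by (simp add: integrable_measure_pmf_finite fI neI)
    have e2: "(\<integral>t. t \<partial>Q1) = norm (S \<omega>) / real n"
    proof -
      have "(\<integral>t. t \<partial>Q1) = (\<integral>i. X i \<omega> \<bullet> v \<partial>measure_pmf (pmf_of_set I))"
        unfolding Q1_def using integral_distr[OF hm idm] by simp
      also have "\<dots> = (\<Sum>i\<in>I. X i \<omega> \<bullet> v) / card I"
        by (rule integral_pmf_of_set[OF neI fI])
      also have "(\<Sum>i\<in>I. X i \<omega> \<bullet> v) = S \<omega> \<bullet> v"
        by (simp add: S_def inner_sum_left)
      finally show ?thesis using Sv cI by simp
    qed
    have "ennreal (norm (S \<omega>) / real n) = ennreal ((\<integral>t. t \<partial>Q1) - (\<integral>t. t \<partial>?P1))"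
      using e1 e2 by simp
    also have "\<dots> \<le> W1 ?P1 Q1" by (rule W1_lower[OF i1 i2])
    also have "\<dots> = W1 (distr M borel (\<lambda>x. x \<bullet> v)) (distr (empirical_measure n (\<lambda>i. X i \<omega>)) borel (\<lambda>x. x \<bullet> v))"
      by (simp add: Q1eq)
    also have "\<dots> \<le> W11 M (empirical_measure n (\<lambda>i. X i \<omega>))"
      unfolding W11_def by (rule SUP_upper) (simp add: nv)
    finally show ?thesis .
  qed
  have step1: "(\<integral>\<^sup>+ \<omega>. ennreal (norm (S \<omega>) / real n) \<partial>P) \<le> (\<integral>\<^sup>+ \<omega>. W11 M (empirical_measure n (\<lambda>i. X i \<omega>)) \<partial>P)"
    by (rule nn_integral_mono) (rule pw)
  define F where "F \<omega> = (\<lambda>i\<in>I. X i \<omega>)" for \<omega>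
  have rv: "\<And>i. i \<in> I \<Longrightarrow> X i \<in> borel_measurable P" using assms(7) by (simp add: I_def)
  have "distr P (\<Pi>\<^sub>M i\<in>I. borel) (\<lambda>x. \<lambda>i\<in>I. X i x) = (\<Pi>\<^sub>M i\<in>I. distr P borel (X i))"
    using P.indep_vars_iff_distr_eq_PiM'[OF neI rv] assms(8) by (simp add: I_def)
  also have "(\<Pi>\<^sub>M i\<in>I. distr P borel (X i)) = (\<Pi>\<^sub>M i\<in>I. M)"
    by (rule PiM_cong) (auto simp: I_def assms(9))
  finally have DE: "distr P (PiM I (\<lambda>_. borel)) F = PiM I (\<lambda>_. M)" by (simp add: F_def[abs_def])
  have mF: "F \<in> measurable P (PiM I (\<lambda>_. borel))"
    unfolding F_def by (rule measurable_restrict) (rule rv)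
  have gsum: "(\<lambda>\<omega>. \<Sum>i\<in>I. \<omega> i) \<in> borel_measurable (PiM I (\<lambda>_. borel :: 'a measure))"
    by (intro borel_measurable_sum comp_meas) auto
  have gmeas: "(\<lambda>\<omega>. ennreal (norm (\<Sum>i\<in>I. \<omega> i) / real n)) \<in> borel_measurable (distr P (PiM I (\<lambda>_. borel)) F)"
    using gsum by measurable
  define T where "T = (\<integral>\<omega>. norm (\<Sum>i\<in>I. \<omega> i) \<partial>PiM I (\<lambda>_. M))"
  have iT: "integrable (PiM I (\<lambda>_. M)) (\<lambda>\<omega>. norm (\<Sum>i\<in>I. \<omega> i) / real n)"
    using normsum_integrable[OF ctx fI order_refl] by simp
  have "(\<integral>\<^sup>+ \<omega>. ennreal (norm (S \<omega>) / real n) \<partial>P) = (\<integral>\<^sup>+ \<omega>. ennreal (norm (\<Sum>i\<in>I. F \<omega> i) / real n) \<partial>P)"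
    by (simp add: S_def F_def)
  also have "\<dots> = (\<integral>\<^sup>+ \<omega>. ennreal (norm (\<Sum>i\<in>I. \<omega> i) / real n) \<partial>distr P (PiM I (\<lambda>_. borel)) F)"
    by (rule nn_integral_distr[OF mF gmeas, symmetric])
  also have "\<dots> = (\<integral>\<^sup>+ \<omega>. ennreal (norm (\<Sum>i\<in>I. \<omega> i) / real n) \<partial>PiM I (\<lambda>_. M))"
    by (simp add: DE)
  also have "\<dots> = ennreal (\<integral>\<omega>. norm (\<Sum>i\<in>I. \<omega> i) / real n \<partial>PiM I (\<lambda>_. M))"
    by (rule nn_integral_eq_integral[OF iT]) auto
  also have "\<dots> = ennreal (T / real n)" by (simp add: T_def)
  finally have step2: "(\<integral>\<^sup>+ \<omega>. ennreal (norm (S \<omega>) / real n) \<partial>P) = ennreal (T / real n)" .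
  have "card I * (\<integral>x. norm x \<partial>M) / (2 * sqrt (2 * card I)) \<le> T"
    unfolding T_def by (rule prod_bound[OF ctx fI neI])
  hence "n * (\<integral>x. norm x \<partial>M) / (2 * sqrt (2 * n)) \<le> T" by (simp add: cI)
  hence "(n * (\<integral>x. norm x \<partial>M) / (2 * sqrt (2 * n))) / n \<le> T / n"
    by (rule divide_right_mono) simp
  moreover have "(n * (\<integral>x. norm x \<partial>M) / (2 * sqrt (2 * n))) / n = 1 / (2 * sqrt (2 * real n)) * (\<integral>x. norm x \<partial>M)"
    using n0 by (simp add: field_simps)
  ultimately have "1 / (2 * sqrt (2 * real n)) * (\<integral>x. norm x \<partial>M) \<le> T / n" by simp
  hence "ennreal (1 / (2 * sqrt (2 * real n)) * (\<integral>x. norm x \<partial>M)) \<le> ennreal (T / real n)"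
    by (rule ennreal_leI)
  then show ?thesis using step1 step2 by simp
qed

end
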